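(* For every integer $r\geq 3$ there exist an $r$-connected $r$-regular graph $G$ of even order and a set $\mathcal O$ of pairwise vertex-disjoint odd cycles of $G$ with the following property: if $t$ is a positive integer and $F$ is a $t$-factor of $G$ with $E(F) \cap E(O) \neq \emptyset$ for every $O \in \mathcal{O}$, then $t \geq \frac{r}{3}$.
   Context: Graphs are finite and loopless. A cycle is a connected $2$-regular subgraph; it is odd if it has an odd number of edges. A $t$-factor of $G$ is a spanning $t$-regular subgraph. $r$-connected means $G$ has more than $r$ vertices and remains connected after deleting any fewer than $r$ vertices. *)

theory Defs
  imports Complex_Main
begin

text \<open>Finite loopless (multi)graphs: vertex set V, edge set E, and an endpoint map
  assigning to each edge a 2-element set of vertices (parallel edges allowed).\<close>

definition loopless_graph :: "'a set \<Rightarrow> 'e set \<Rightarrow> ('e \<Rightarrow> 'a set) \<Rightarrow> bool" where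
  "loopless_graph V E ends \<longleftrightarrow> finite V \<and> finite E \<and>
     (\<forall>e\<in>E. ends e \<subseteq> V \<and> card (ends e) = 2)"

definition degree_in :: "'e set \<Rightarrow> ('e \<Rightarrow> 'a set) \<Rightarrow> 'a \<Rightarrow> nat" where
  "degree_in E ends v = card {e\<in>E. v \<in> ends e}"

definition regular_on :: "'a set \<Rightarrow> 'e set \<Rightarrow> ('e \<Rightarrow> 'a set) \<Rightarrow> nat \<Rightarrow> bool" where
  "regular_on V E ends k \<longleftrightarrow> (\<forall>v\<in>V. degree_in E ends v = k)"

definition adj_in :: "'a set \<Rightarrow> 'e set \<Rightarrow> ('e \<Rightarrow> 'a set) \<Rightarrow> 'a \<Rightarrow> 'a \<Rightarrow> bool" where
  "adj_in W E ends x y \<longleftrightarrow> (\<exists>e\<in>E. ends e \<subseteq> W \<and> x \<in> ends e \<and> y \<in> ends e)"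

definition connected_on :: "'a set \<Rightarrow> 'e set \<Rightarrow> ('e \<Rightarrow> 'a set) \<Rightarrow> bool" where
  "connected_on W E ends \<longleftrightarrow> W \<noteq> {} \<and> (\<forall>u\<in>W. \<forall>w\<in>W. (adj_in W E ends)\<^sup>*\<^sup>* u w)"

definition r_connected :: "'a set \<Rightarrow> 'e set \<Rightarrow> ('e \<Rightarrow> 'a set) \<Rightarrow> nat \<Rightarrow> bool" where
  "r_connected V E ends r \<longleftrightarrow> card V > r \<and>
     (\<forall>S. S \<subseteq> V \<and> card S < r \<longrightarrow> connected_on (V - S) E ends)"

definition is_subgraph :: "'a set \<Rightarrow> 'e set \<Rightarrow> ('e \<Rightarrow> 'a set) \<Rightarrow> 'a set \<Rightarrow> 'e set \<Rightarrow> bool" where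
  "is_subgraph V E ends V' E' \<longleftrightarrow> V' \<subseteq> V \<and> E' \<subseteq> E \<and> (\<forall>e\<in>E'. ends e \<subseteq> V')"

definition is_cycle :: "'a set \<Rightarrow> 'e set \<Rightarrow> ('e \<Rightarrow> 'a set) \<Rightarrow> 'a set \<Rightarrow> 'e set \<Rightarrow> bool" where
  "is_cycle V E ends V' E' \<longleftrightarrow> is_subgraph V E ends V' E' \<and> connected_on V' E' ends
     \<and> regular_on V' E' ends 2"

definition is_factor :: "'a set \<Rightarrow> 'e set \<Rightarrow> ('e \<Rightarrow> 'a set) \<Rightarrow> nat \<Rightarrow> 'e set \<Rightarrow> bool" where
  "is_factor V E ends t F \<longleftrightarrow> is_subgraph V E ends V F \<and> regular_on V F ends t"

end

theory Submission
  imports Defs "HOL-Library.Nat_Bijection"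
begin


definition pe :: "nat \<Rightarrow> nat \<Rightarrow> nat" where "pe u w = prod_encode (min u w, max u w)"
definition ends :: "nat \<Rightarrow> nat set" where "ends e = {fst (prod_decode e), snd (prod_decode e)}"
definition Adj :: "nat \<Rightarrow> nat \<Rightarrow> nat \<Rightarrow> bool" where
  "Adj r u w \<longleftrightarrow> u < 6*r-6 \<and> w < 6*r-6 \<and> u \<noteq> w \<and>
    ((u<3*r \<and> w<3*r \<and> u div 3 = w div 3) \<or> (u<3*r \<and> 3*r \<le> w \<and> u mod 3 = w mod 3)
     \<or> (w<3*r \<and> 3*r \<le> u \<and> u mod 3 = w mod 3))"
definition Es :: "nat \<Rightarrow> nat set" where "Es r = {pe u w | u w. Adj r u w}"
definition Xc :: "nat \<Rightarrow> nat \<Rightarrow> nat set" where "Xc r c = {w. 3*r \<le> w \<and> w < 6*r-6 \<and> w mod 3 = c}"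
definition Tc :: "nat \<Rightarrow> nat \<Rightarrow> nat set" where "Tc r c = {w. w < 3*r \<and> w mod 3 = c}"

lemma ends_pe[simp]: "ends (pe u w) = {u, w}"
  unfolding ends_def pe_def by (auto simp: min_def max_def)

lemma pe_eq: "pe u w = pe x y \<longleftrightarrow> (u=x \<and> w=y) \<or> (u=y \<and> w=x)"
  unfolding pe_def by (auto simp: prod_encode_eq min_def max_def split: if_splits)

lemma pe_sym: "pe u w = pe w u" by (auto simp: pe_eq)

lemma Adj_sym: "Adj r u w \<Longrightarrow> Adj r w u" unfolding Adj_def by auto

lemma card_ends: "e \<in> Es r \<Longrightarrow> card (ends e) = 2 \<and> ends e \<subseteq> {..<6*r-6}"
  unfolding Es_def Adj_def by auto

lemma nbr_eq: "{e\<in>Es r. v \<in> ends e} = pe v ` {w. Adj r v w}"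
proof
  show "{e \<in> Es r. v \<in> ends e} \<subseteq> pe v ` {w. Adj r v w}"
  proof
    fix e assume "e \<in> {e \<in> Es r. v \<in> ends e}"
    then obtain u w where e: "e = pe u w" "Adj r u w" "v \<in> {u,w}" unfolding Es_def by auto
    then show "e \<in> pe v ` {w. Adj r v w}"
      using Adj_sym pe_sym by blast
  qed
  show "pe v ` {w. Adj r v w} \<subseteq> {e \<in> Es r. v \<in> ends e}" unfolding Es_def by auto
qed

lemma deg_eq: "degree_in (Es r) ends v = card {w. Adj r v w}"
proof -
  have "inj_on (pe v) {w. Adj r v w}" by (auto simp: inj_on_def pe_eq)
  then show ?thesis unfolding degree_in_def nbr_eq by (simp add: card_image)
qed

lemma Xc_img: "c < 3 \<Longrightarrow> Xc r c = (\<lambda>b. 3*r+3*b+c) ` {..<r-2}"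
proof (intro set_eqI iffI)
  fix x assume c: "c<3" and x: "x \<in> Xc r c"
  then have a: "3*r \<le> x" "x < 6*r-6" "x mod 3 = c" unfolding Xc_def by auto
  obtain y where y: "x = 3*r + y" using a(1) le_Suc_ex by blast
  have m: "x mod 3 = y mod 3" unfolding y by simp
  have ym: "y mod 3 = c" using m a(3) by simp
  have "y = 3*(y div 3) + c" by (metis ym div_mult_mod_eq mult.commute)
  then have e1: "x = 3*r + 3*(y div 3) + c" using y by linarith
  have "y < (r-2)*3" using a y by auto
  then have "y div 3 < r-2" by (rule less_mult_imp_div_less)
  then have "x = 3*r + 3*(y div 3) + c \<and> y div 3 < r-2" using e1 by simp
  then show "x \<in> (\<lambda>b. 3*r+3*b+c) ` {..<r-2}" by (metis imageI lessThan_iff)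
next
  fix x assume c: "c<3" and x: "x \<in> (\<lambda>b. 3*r+3*b+c) ` {..<r-2}"
  then obtain b where b: "x = 3*r+3*b+c" "b < r-2" by auto
  have "3*r+3*b+c = c + (r+b)*3" by simp
  then have "(3*r+3*b+c) mod 3 = c mod 3" by (metis mod_mult_self1)
  then have "(3*r+3*b+c) mod 3 = c" using c by simp
  then show "x \<in> Xc r c" using b unfolding Xc_def by auto
qed

lemma card_Xc: "c < 3 \<Longrightarrow> card (Xc r c) = r - 2"
  by (simp add: Xc_img card_image inj_on_def)

lemma Tc_img: "c < 3 \<Longrightarrow> Tc r c = (\<lambda>i. 3*i+c) ` {..<r}"
proof (intro set_eqI iffI)
  fix x assume c: "c<3" and x: "x \<in> Tc r c"
  then have "x = 3*(x div 3) + c" "x div 3 < r" unfolding Tc_def by auto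
  then show "x \<in> (\<lambda>i. 3*i+c) ` {..<r}" by (metis imageI lessThan_iff)
next
  fix x assume c: "c<3" and x: "x \<in> (\<lambda>i. 3*i+c) ` {..<r}"
  then show "x \<in> Tc r c" unfolding Tc_def by auto
qed

lemma card_Tc: "c < 3 \<Longrightarrow> card (Tc r c) = r"
  by (simp add: Tc_img card_image inj_on_def)

definition TV :: "nat \<Rightarrow> nat set" where "TV j = {3*j, 3*j+1, 3*j+2}"

lemma div3_lt: "w div 3 = v div 3 \<Longrightarrow> v < 3*r \<Longrightarrow> w < 3*(r::nat)"
  by (metis div_less_iff_less_mult mult.commute zero_less_numeral)

lemma TV_iff: "w \<in> TV j \<longleftrightarrow> w div 3 = j"
proof
  assume "w \<in> TV j" then show "w div 3 = j" unfolding TV_def by auto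
next
  assume "w div 3 = j"
  then have e: "w = 3*j + w mod 3" using div_mult_mod_eq[of w 3] by simp
  have "w mod 3 < 3" by simp
  then have "w mod 3 = 0 \<or> w mod 3 = 1 \<or> w mod 3 = 2" by linarith
  then have "w = 3*j \<or> w = 3*j+1 \<or> w = 3*j+2" using e by auto
  then show "w \<in> TV j" unfolding TV_def by auto
qed

lemma card_TV: "card (TV j) = 3" unfolding TV_def by auto

lemma nbrT: assumes "r \<ge> 3" "v < 3*r"
  shows "{w. Adj r v w} = (TV (v div 3) - {v}) \<union> Xc r (v mod 3)"
proof -
  have h: "w div 3 = v div 3 \<Longrightarrow> w < 3*r" for w using assms(2) div3_lt by blast
  have h2: "3*r < 6*r-6" "v < 6*r-6" using assms by auto
  show ?thesis
  proof (intro set_eqI iffI)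
    fix x assume "x \<in> {w. Adj r v w}"
    then show "x \<in> (TV (v div 3) - {v}) \<union> Xc r (v mod 3)"
      using assms h2 by (auto simp: Adj_def Xc_def TV_iff)
  next
    fix x assume "x \<in> (TV (v div 3) - {v}) \<union> Xc r (v mod 3)"
    then show "x \<in> {w. Adj r v w}"
      using assms h2 h[of x] by (auto simp: Adj_def Xc_def TV_iff)
  qed
qed

lemma nbrX: assumes "r \<ge> 3" "3*r \<le> v" "v < 6*r-6"
  shows "{w. Adj r v w} = Tc r (v mod 3)"
proof (intro set_eqI iffI)
  fix x assume "x \<in> {w. Adj r v w}"
  then show "x \<in> Tc r (v mod 3)" using assms unfolding Adj_def Tc_def by auto
next
  fix x assume x: "x \<in> Tc r (v mod 3)"
  then have "x < 3*r" "x mod 3 = v mod 3" unfolding Tc_def by auto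
  moreover have "3*r < 6*r-6" using assms by auto
  ultimately show "x \<in> {w. Adj r v w}" using assms unfolding Adj_def by auto
qed

lemma reg: assumes "r \<ge> 3" "v < 6*r-6" shows "degree_in (Es r) ends v = r"
proof (cases "v < 3*r")
  case True
  have fin: "finite (TV (v div 3) - {v})" unfolding TV_def by auto
  have c1: "card (TV (v div 3) - {v}) = 2" using card_TV[of "v div 3"] TV_iff[of v "v div 3"]
    by (simp add: card_Diff_singleton_if)
  have "(TV (v div 3) - {v}) \<inter> Xc r (v mod 3) = {}"
  proof -
    have "\<forall>x \<in> TV (v div 3). x < 3*r" using True div3_lt TV_iff by blast
    then show ?thesis unfolding Xc_def by auto
  qed
  moreover have "finite (Xc r (v mod 3))" using Xc_img[of "v mod 3" r] by auto
  ultimately have "card ((TV (v div 3) - {v}) \<union> Xc r (v mod 3)) = 2 + (r-2)"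
    using fin c1 card_Xc[of "v mod 3" r] by (simp add: card_Un_disjoint)
  moreover have "2 + (r-2) = r" using assms(1) by simp
  ultimately show ?thesis unfolding deg_eq nbrT[OF assms(1) True] by simp
next
  case False
  then have le: "3*r \<le> v" by simp
  then show ?thesis unfolding deg_eq nbrX[OF assms(1) le assms(2)] using card_Tc[of "v mod 3" r] by simp
qed


lemma adjW: "x \<in> W \<Longrightarrow> y \<in> W \<Longrightarrow> Adj r x y \<Longrightarrow> adj_in W (Es r) ends x y"
proof -
  assume a: "x \<in> W" "y \<in> W" "Adj r x y"
  have "pe x y \<in> Es r" unfolding Es_def using a(3) by blast
  moreover have "ends (pe x y) \<subseteq> W" using a by simp
  ultimately show ?thesis unfolding adj_in_def by force
qed

lemma adj_sym_rt: "(adj_in W E en)\<^sup>*\<^sup>* x y \<Longrightarrow> (adj_in W E en)\<^sup>*\<^sup>* y x"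
proof (induction rule: rtranclp_induct)
  case base then show ?case by simp
next
  case (step y z)
  have "adj_in W E en z y" using step(2) unfolding adj_in_def by blast
  then show ?case using step(3) by (rule converse_rtranclp_into_rtranclp)
qed

lemma conn: assumes r3: "r \<ge> 3" and SV: "S \<subseteq> {..<6*r-6}" and cS: "card S < r"
  shows "connected_on ({..<6*r-6} - S) (Es r) ends"
proof -
  define W where "W = {..<6*r-6} - S"
  define R where "R = (adj_in W (Es r) ends)\<^sup>*\<^sup>*"
  have finS: "finite S" using SV finite_subset by blast
  have "card W = (6*r-6) - card S" unfolding W_def using SV finS by (simp add: card_Diff_subset)
  then have "card W > 0" using cS r3 by linarith
  then have Wne: "W \<noteq> {}" by auto
  have "\<exists>i0<r. TV i0 \<inter> S = {}"
  proof (rule ccontr)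
    assume "\<not> ?thesis"
    then have ne: "\<forall>i<r. TV i \<inter> S \<noteq> {}" by simp
    define f where "f i = (SOME n. n \<in> TV i \<inter> S)" for i
    have f: "f i \<in> TV i \<inter> S" if "i < r" for i
      unfolding f_def by (rule someI_ex) (use ne that in blast)
    have "inj_on f {..<r}"
    proof (rule inj_onI)
      fix i k assume "i \<in> {..<r}" "k \<in> {..<r}" "f i = f k"
      then show "i = k" using f[of i] f[of k] TV_iff by (metis IntD1 lessThan_iff)
    qed
    moreover have "f ` {..<r} \<subseteq> S" using f by auto
    ultimately have "card {..<r} \<le> card S" using finS by (rule card_inj_on_le)
    then show False using cS by simp
  qed
  then obtain i0 where i0: "i0 < r" "TV i0 \<inter> S = {}" by blast
  define h where "h = 3*i0"
  have TVW: "u \<in> W" if "u div 3 = i0" for u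
  proof -
    have "u < 3*r" using div3_lt[of u "3*i0+0" r] that i0(1) by auto
    then show ?thesis using that i0(2) r3 TV_iff[of u i0] unfolding W_def by auto
  qed
  have H1: "R u h" if "u div 3 = i0" for u
  proof (cases "u = h")
    case True then show ?thesis unfolding R_def by simp
  next
    case False
    have "u < 3*r" "h < 3*r" using div3_lt[of u "3*i0+0" r] that i0(1) unfolding h_def by auto
    then have "Adj r u h" using False that r3 unfolding Adj_def h_def by auto
    then show ?thesis unfolding R_def using adjW TVW that h_def by (metis r_into_rtranclp div_mult_self1_is_m zero_less_numeral)
  qed
  have H2: "R x h" if "x \<in> W" "3*r \<le> x" for x
  proof -
    define u where "u = 3*i0 + x mod 3"
    have ud: "u div 3 = i0" unfolding u_def by simp
    have "u < 3*r" using div3_lt[of u "3*i0+0" r] ud i0(1) by auto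
    moreover have "x < 6*r-6" using that unfolding W_def by auto
    moreover have "u mod 3 = x mod 3" unfolding u_def by simp
    ultimately have "Adj r x u" using that(2) unfolding Adj_def by auto
    then have "R x u" unfolding R_def using adjW TVW[OF ud] that(1) by (metis r_into_rtranclp)
    then show ?thesis using H1[OF ud] unfolding R_def by (rule rtranclp_trans)
  qed
  have H3: "R v h" if vW: "v \<in> W" and v3: "v < 3*r" for v
  proof -
    define j where "j = v div 3"
    have jlt: "3*j+a < 3*r" if "a<3" for a using div3_lt[of "3*j+a" v r] v3 that unfolding j_def by simp
    have "\<exists>a<3. 3*j+a \<in> W \<and> (\<exists>x\<in>W. x \<in> Xc r a)"
    proof (rule ccontr)
      assume nc: "\<not> ?thesis"
      define P where "P a = (if 3*j+a \<in> S then {3*j+a} else Xc r a)" for a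
      have PS: "P a \<subseteq> S" if "a < 3" for a
      proof (cases "3*j+a \<in> S")
        case True then show ?thesis unfolding P_def by simp
      next
        case False
        then have "3*j+a \<in> W" using jlt[OF that] r3 unfolding W_def by auto
        then have "\<forall>x\<in>Xc r a. x \<notin> W" using nc that by blast
        then show ?thesis using False unfolding P_def W_def Xc_def by auto
      qed
      have finP: "finite (P a)" if "a<3" for a using PS[OF that] finS finite_subset by blast
      have Pm: "P a \<subseteq> {n. n mod 3 = a}" if "a<3" for a using that unfolding P_def Xc_def by auto
      have cP: "card (P a) \<ge> 1" if "a<3" for a using that card_Xc[OF that, of r] r3 unfolding P_def by auto
      have vj: "3*j + v mod 3 = v" unfolding j_def by simp
      have cPv: "card (P (v mod 3)) = r-2" using vj vW card_Xc[of "v mod 3" r] unfolding P_def W_def by auto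
      have "card (P 0 \<union> P 1 \<union> P 2) = card (P 0) + card (P 1) + card (P 2)"
      proof -
        have Pd: "P a \<inter> P b = {}" if "a<3" "b<3" "a\<noteq>b" for a b
        proof (rule ccontr)
          assume "P a \<inter> P b \<noteq> {}"
          then obtain x where x: "x \<in> P a" "x \<in> P b" by blast
          have "x mod 3 = a" using Pm[OF that(1)] x(1) by blast
          moreover have "x mod 3 = b" using Pm[OF that(2)] x(2) by blast
          ultimately show False using that(3) by simp
        qed
        have d1: "P 0 \<inter> P 1 = {}" using Pd[of 0 1] by simp
        have d2: "(P 0 \<union> P 1) \<inter> P 2 = {}" using Pd[of 0 2] Pd[of 1 2] by (simp add: Int_Un_distrib2)
        show ?thesis using d1 d2 finP[of 0] finP[of 1] finP[of 2] by (simp add: card_Un_disjoint)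
      qed
      moreover have "card (P 0 \<union> P 1 \<union> P 2) \<le> card S"
        using PS[of 0] PS[of 1] PS[of 2] finS by (simp add: card_mono)
      moreover have "card (P 0) + card (P 1) + card (P 2) \<ge> r"
      proof -
        have "v mod 3 = 0 \<or> v mod 3 = 1 \<or> v mod 3 = 2" by auto
        then show ?thesis using cPv cP[of 0] cP[of 1] cP[of 2] r3 by auto
      qed
      ultimately show False using cS by linarith
    qed
    then obtain a x where a: "a<3" "3*j+a \<in> W" "x \<in> W" "x \<in> Xc r a" by blast
    define u where "u = 3*j+a"
    have "R v u"
    proof (cases "v = u")
      case True then show ?thesis unfolding R_def by simp
    next
      case False
      have "Adj r v u" using False v3 jlt[OF a(1)] r3 a(1) unfolding Adj_def u_def j_def by auto
      then show ?thesis unfolding R_def using adjW vW a(2) u_def by (metis r_into_rtranclp)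
    qed
    moreover have "R u x"
    proof -
      have "Adj r u x" using a jlt[OF a(1)] unfolding Adj_def u_def Xc_def by auto
      then show ?thesis unfolding R_def using adjW a u_def by (metis r_into_rtranclp)
    qed
    moreover have "R x h" using H2 a unfolding Xc_def by auto
    ultimately show ?thesis unfolding R_def by (meson rtranclp_trans)
  qed
  have all: "R w h" if "w \<in> W" for w using H2 H3 that by (cases "w < 3*r") auto
  show ?thesis unfolding connected_on_def W_def[symmetric]
    using Wne all adj_sym_rt unfolding R_def by (meson rtranclp_trans)
qed


lemma ind: "finite F \<Longrightarrow> (\<Sum>e\<in>F. if P e then 1 else 0) = card {e\<in>F. P e}"
  by (simp add: sum.If_cases Int_def)
lemma dc: "finite F \<Longrightarrow> finite A \<Longrightarrow> (\<Sum>v\<in>A. card {e\<in>F. v \<in> en e}) = (\<Sum>e\<in>F. card (en e \<inter> A))"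
proof -
  assume f: "finite F" "finite A"
  have "(\<Sum>v\<in>A. card {e\<in>F. v \<in> en e}) = (\<Sum>v\<in>A. \<Sum>e\<in>F. if v \<in> en e then 1 else 0)"
    using f by (simp add: ind)
  also have "\<dots> = (\<Sum>e\<in>F. \<Sum>v\<in>A. if v \<in> en e then 1 else 0)" by (rule sum.swap)
  also have "\<dots> = (\<Sum>e\<in>F. card (en e \<inter> A))"
    using f by (simp add: ind Int_def conj_commute)
  finally show ?thesis .
qed

definition Te :: "nat \<Rightarrow> nat set" where
  "Te i = {pe (3*i) (3*i+1), pe (3*i) (3*i+2), pe (3*i+1) (3*i+2)}"

lemma finite_Es: "finite (Es r)"
proof -
  have "Es r \<subseteq> (\<lambda>(u,w). pe u w) ` ({..<6*r-6} \<times> {..<6*r-6})"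
    unfolding Es_def Adj_def by auto
  then show ?thesis by (rule finite_subset) auto
qed

lemma Te_sub: assumes "r \<ge> 3" "i < r" shows "Te i \<subseteq> Es r"
proof -
  have "3*i+2 < 3*r" using assms by auto
  moreover have "3*r \<le> 6*r-6" using assms by auto
  moreover have "(3*i+1) div 3 = i" "(3*i+2) div 3 = i" by simp_all
  ultimately have "Adj r (3*i) (3*i+1)" "Adj r (3*i) (3*i+2)" "Adj r (3*i+1) (3*i+2)"
    unfolding Adj_def by auto
  then show ?thesis unfolding Te_def Es_def by blast
qed

lemma card_Te: "card (Te i) = 3" unfolding Te_def by (simp add: pe_eq)

lemma Te_ends: "e \<in> Te i \<Longrightarrow> ends e \<subseteq> TV i"
  unfolding Te_def TV_def by auto

lemma cyc: assumes "r \<ge> 3" "i < r" shows "is_cycle {..<6*r-6} (Es r) ends (TV i) (Te i)"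
proof -
  have "3*i+2 < 6*r-6" using assms by auto
  then have sub: "is_subgraph {..<6*r-6} (Es r) ends (TV i) (Te i)"
    unfolding is_subgraph_def using Te_sub[OF assms] Te_ends by (auto simp: TV_def)
  have ad: "adj_in (TV i) (Te i) ends u w" if "u \<in> TV i" "w \<in> TV i" "u \<noteq> w" for u w
    unfolding adj_in_def using that unfolding TV_def Te_def
    by (auto intro: bexI[of _ "pe (3*i) (3*i+1)"] bexI[of _ "pe (3*i) (3*i+2)"] bexI[of _ "pe (3*i+1) (3*i+2)"])
  have con: "connected_on (TV i) (Te i) ends"
    unfolding connected_on_def
  proof (intro conjI ballI)
    show "TV i \<noteq> {}" unfolding TV_def by simp
    fix u w assume "u \<in> TV i" "w \<in> TV i"
    then show "(adj_in (TV i) (Te i) ends)\<^sup>*\<^sup>* u w" using ad by (cases "u = w") auto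
  qed
  have reg: "regular_on (TV i) (Te i) ends 2"
    unfolding regular_on_def degree_in_def
  proof
    fix v assume "v \<in> TV i"
    then have "v = 3*i \<or> v = 3*i+1 \<or> v = 3*i+2" unfolding TV_def by auto
    then show "card {e \<in> Te i. v \<in> ends e} = 2"
    proof (elim disjE)
      assume "v = 3*i"
      then have "{e \<in> Te i. v \<in> ends e} = {pe (3*i) (3*i+1), pe (3*i) (3*i+2)}" unfolding Te_def by auto
      then show ?thesis by (simp add: pe_eq)
    next
      assume "v = 3*i+1"
      then have "{e \<in> Te i. v \<in> ends e} = {pe (3*i) (3*i+1), pe (3*i+1) (3*i+2)}" unfolding Te_def by auto
      then show ?thesis by (simp add: pe_eq)
    next
      assume "v = 3*i+2"
      then have "{e \<in> Te i. v \<in> ends e} = {pe (3*i) (3*i+2), pe (3*i+1) (3*i+2)}" unfolding Te_def by auto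
      then show ?thesis by (simp add: pe_eq)
    qed
  qed
  show ?thesis unfolding is_cycle_def using sub con reg by blast
qed

lemma TV_disj: "i \<noteq> k \<Longrightarrow> TV i \<inter> TV k = {}" using TV_iff by auto

lemma factor_bound:
  assumes r3: "r \<ge> 3" and FE: "F \<subseteq> Es r" and deg: "\<forall>v\<in>{..<6*r-6}. degree_in F ends v = t"
    and meet: "\<forall>i<r. F \<inter> Te i \<noteq> {}"
  shows "r \<le> 3*t"
proof -
  define V where "V = {..<6*r-6}"
  define X where "X = {3*r..<6*r-6}"
  define Fin where "Fin = {e\<in>F. ends e \<inter> X = {}}"
  have finF: "finite F" using FE finite_Es finite_subset by blast
  have "(\<Sum>v\<in>V. degree_in F ends v) = (\<Sum>e\<in>F. card (ends e \<inter> V))"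
    unfolding degree_in_def using dc[OF finF, of V ends] V_def by simp
  also have "\<dots> = (\<Sum>e\<in>F. 2)"
  proof (rule sum.cong)
    fix e assume "e \<in> F"
    then have "card (ends e) = 2 \<and> ends e \<subseteq> V" using card_ends FE V_def by blast
    then show "card (ends e \<inter> V) = 2" by (simp add: Int_absorb2)
  qed simp
  finally have s1: "t * (6*r-6) = 2 * card F" using deg V_def by (simp add: mult.commute)
  have "(\<Sum>v\<in>X. degree_in F ends v) = (\<Sum>e\<in>F. card (ends e \<inter> X))"
    unfolding degree_in_def using dc[OF finF, of X ends] X_def by simp
  also have "\<dots> = (\<Sum>e\<in>F. if ends e \<inter> X \<noteq> {} then 1 else 0)"
  proof (rule sum.cong)
    fix e assume "e \<in> F"
    then obtain u w where e: "e = pe u w" "Adj r u w" using FE unfolding Es_def by blast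
    show "card (ends e \<inter> X) = (if ends e \<inter> X \<noteq> {} then 1 else 0)"
    proof (cases "ends e \<inter> X = {}")
      case True then show ?thesis by simp
    next
      case False
      have "ends e \<inter> X = {u} \<or> ends e \<inter> X = {w}"
        using e False unfolding Adj_def X_def by auto
      then show ?thesis using False by auto
    qed
  qed simp
  also have "\<dots> = card (F - Fin)"
  proof -
    have "F - Fin = {e\<in>F. ends e \<inter> X \<noteq> {}}" unfolding Fin_def by auto
    then show ?thesis using ind[OF finF, of "\<lambda>e. ends e \<inter> X \<noteq> {}"] by simp
  qed
  finally have s2: "t * (3*r-6) = card (F - Fin)" using deg unfolding X_def by (simp add: mult.commute)
  have FinF: "Fin \<subseteq> F" unfolding Fin_def by auto
  have s3: "card F = card Fin + card (F - Fin)"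
    using FinF finF by (metis card_Diff_subset card_mono finite_subset le_add_diff_inverse)
  have UF: "(\<Union>i<r. F \<inter> Te i) \<subseteq> Fin"
  proof
    fix e assume "e \<in> (\<Union>i<r. F \<inter> Te i)"
    then obtain i where i: "i<r" "e \<in> F" "e \<in> Te i" by blast
    have "ends e \<inter> X = {}"
    proof -
      have "\<forall>n\<in>TV i. n < 3*r" using i(1) unfolding TV_def by auto
      then show ?thesis using Te_ends[OF i(3)] unfolding X_def by fastforce
    qed
    then show "e \<in> Fin" unfolding Fin_def using i by blast
  qed
  have "card (\<Union>i<r. F \<inter> Te i) = (\<Sum>i<r. card (F \<inter> Te i))"
  proof (rule card_UN_disjoint)
    show "finite {..<r}" by simp
    show "\<forall>i\<in>{..<r}. finite (F \<inter> Te i)" using finF by blast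
    show "\<forall>i\<in>{..<r}. \<forall>j\<in>{..<r}. i \<noteq> j \<longrightarrow> F \<inter> Te i \<inter> (F \<inter> Te j) = {}"
    proof (intro ballI impI)
      fix i j :: nat assume "i \<noteq> j"
      show "F \<inter> Te i \<inter> (F \<inter> Te j) = {}"
      proof (rule ccontr)
        assume "F \<inter> Te i \<inter> (F \<inter> Te j) \<noteq> {}"
        then obtain e where "e \<in> Te i" "e \<in> Te j" by blast
        then have "ends e \<subseteq> TV i \<inter> TV j" using Te_ends by blast
        moreover have "ends e \<noteq> {}" using \<open>e \<in> Te i\<close> unfolding Te_def by auto
        ultimately show False using TV_disj[OF \<open>i \<noteq> j\<close>] by auto
      qed
    qed
  qed
  moreover have "(\<Sum>i<r. card (F \<inter> Te i)) \<ge> (\<Sum>i<r. 1)"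
  proof (rule sum_mono)
    fix i assume "i \<in> {..<r}"
    then have "F \<inter> Te i \<noteq> {}" using meet by auto
    then show "1 \<le> card (F \<inter> Te i)" using finF by (simp add: Suc_le_eq card_gt_0_iff)
  qed
  ultimately have "card (\<Union>i<r. F \<inter> Te i) \<ge> r" by simp
  moreover have "card (\<Union>i<r. F \<inter> Te i) \<le> card Fin"
    using UF finF FinF by (meson card_mono finite_subset)
  ultimately have cr: "r \<le> card Fin" by linarith
  obtain s where s: "r = s + 3" using r3 by (metis add.commute le_Suc_ex)
  have e1: "t*(6*s+12) = 2*card Fin + 2*card (F-Fin)" using s1 s3 s by (simp add: algebra_simps)
  have e2: "card (F-Fin) = t*(3*s+3)" using s2 s by (simp add: algebra_simps)
  have e3: "t*(6*s+12) = 6*(t*s) + 12*t" "t*(3*s+3) = 3*(t*s) + 3*t" by (simp_all add: algebra_simps)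
  have "2*card Fin = 6*t" using e1 e2 e3 by linarith
  then show ?thesis using cr by linarith
qed


theorem theorem3p1:
  fixes r :: nat
  assumes "r \<ge> 3"
  shows "\<exists>(V::nat set) (E::nat set) (ends::nat \<Rightarrow> nat set) (Cs::(nat set \<times> nat set) set).
    loopless_graph V E ends \<and> regular_on V E ends r \<and> r_connected V E ends r \<and> even (card V) \<and>
    (\<forall>C\<in>Cs. is_cycle V E ends (fst C) (snd C) \<and> odd (card (snd C))) \<and>
    (\<forall>C1\<in>Cs. \<forall>C2\<in>Cs. C1 \<noteq> C2 \<longrightarrow> fst C1 \<inter> fst C2 = {}) \<and>
    (\<forall>(t::nat) F. t > 0 \<longrightarrow> is_factor V E ends t F \<longrightarrow> (\<forall>C\<in>Cs. F \<inter> snd C \<noteq> {}) \<longrightarrow>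
       real t \<ge> real r / 3)"
proof -
  define V where "V = {..<6*r-6}"
  define Cs where "Cs = (\<lambda>i. (TV i, Te i)) ` {..<r}"
  have lg: "loopless_graph V (Es r) ends"
    unfolding loopless_graph_def V_def using finite_Es card_ends by blast
  have rg: "regular_on V (Es r) ends r"
    unfolding regular_on_def V_def using reg[OF assms] by simp
  have rc: "r_connected V (Es r) ends r"
    unfolding r_connected_def V_def using conn[OF assms] assms by auto
  have ev: "even (card V)"
  proof -
    have "card V = 2*(3*r-3)" unfolding V_def by simp
    then show ?thesis by simp
  qed
  have cy: "\<forall>C\<in>Cs. is_cycle V (Es r) ends (fst C) (snd C) \<and> odd (card (snd C))"
    unfolding Cs_def V_def using cyc[OF assms] card_Te by auto
  have dj: "\<forall>C1\<in>Cs. \<forall>C2\<in>Cs. C1 \<noteq> C2 \<longrightarrow> fst C1 \<inter> fst C2 = {}"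
  proof (intro ballI impI)
    fix C1 C2 assume c: "C1 \<in> Cs" "C2 \<in> Cs" "C1 \<noteq> C2"
    then obtain i k where ik: "C1 = (TV i, Te i)" "C2 = (TV k, Te k)" unfolding Cs_def by blast
    then have "i \<noteq> k" using c(3) by blast
    then show "fst C1 \<inter> fst C2 = {}" using ik TV_disj by simp
  qed
  have fb: "\<forall>(t::nat) F. t > 0 \<longrightarrow> is_factor V (Es r) ends t F \<longrightarrow> (\<forall>C\<in>Cs. F \<inter> snd C \<noteq> {}) \<longrightarrow>
       real t \<ge> real r / 3"
  proof (intro allI impI)
    fix t :: nat and F
    assume f: "is_factor V (Es r) ends t F" and m: "\<forall>C\<in>Cs. F \<inter> snd C \<noteq> {}"
    have FE: "F \<subseteq> Es r" using f unfolding is_factor_def is_subgraph_def by blast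
    have dg: "\<forall>v\<in>{..<6*r-6}. degree_in F ends v = t"
      using f unfolding is_factor_def regular_on_def V_def by blast
    have mt: "\<forall>i<r. F \<inter> Te i \<noteq> {}" using m unfolding Cs_def by auto
    have "r \<le> 3*t" using factor_bound[OF assms FE dg mt] .
    then show "real t \<ge> real r / 3" by linarith
  qed
  show ?thesis using lg rg rc ev cy dj fb by blast
qed

end
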